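(* Let $\mathcal{C}$ be a clutter whose vertex set is a subset of $\{x_1,\dots,x_n\}$, $S=\mathbb{K}[x_1,\dots,x_n]$ with $\mathbb{K}$ a field. If $\{e_1,\dots,e_s\}$ is a 2-collage in $\mathcal{C}$, then \[ \operatorname{sreg}(S/I(\mathcal{C}))\le\sum_{i=1}^s(|e_i|-1). \]
   Context: A clutter $\mathcal{C}$ consists of a finite vertex set and a collection $E(\mathcal{C})$ of subsets (edges), no edge containing another; vertices are identified with variables and $I(\mathcal{C})=(\prod_{x\in e}x : e\in E(\mathcal{C}))$ is the edge ideal. A 2-collage for $\mathcal{C}$ is a subset $C\subseteq E(\mathcal{C})$ such that for each $e\in E(\mathcal{C})$ there is a vertex $v$ with $e\setminus\{v\}$ contained in some edge of $C$. Stanley regularity: for a squarefree monomial ideal $I\subset S$, a squarefree Stanley decomposition of $S/I$ is a decomposition $S/I=\bigoplus_{i=1}^r u_i\mathbb{K}[Z_i]$ as $\mathbb{K}$-vector spaces, where $Z_i\subseteq\{x_1,\dots,x_n\}$, $u_i$ are (images of) squarefree monomials with $\operatorname{supp}(u_i)\subseteq Z_i$, and each $u_i\mathbb{K}[Z_i]$ is free over $\mathbb{K}[Z_i]$. Its Stanley regularity is $\max_i\deg(u_i)$, and $\operatorname{sreg}(S/I)$ is the minimum over all such decompositions. *)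

theory Defs
  imports Main "HOL-Library.Poly_Mapping"
begin

text \<open>The ring S = K[x_0,...,x_{n-1}] consists of those polynomials involving only
  variables with index < n.\<close>

type_synonym 'k mpoly = "(nat \<Rightarrow>\<^sub>0 nat) \<Rightarrow>\<^sub>0 'k"

definition poly_vars :: "'k::zero mpoly \<Rightarrow> nat set" where
  "poly_vars p = (\<Union>m\<in>Poly_Mapping.keys p. Poly_Mapping.keys (m::nat \<Rightarrow>\<^sub>0 nat))"

definition in_polyring :: "nat set \<Rightarrow> 'k::zero mpoly \<Rightarrow> bool" where
  "in_polyring Z p \<longleftrightarrow> poly_vars p \<subseteq> Z"

definition sqmono :: "nat set \<Rightarrow> 'k::{zero,one} mpoly" where
  "sqmono U = Poly_Mapping.single (\<Sum>i\<in>U. Poly_Mapping.single i (1::nat)) 1"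

definition clutter :: "nat set \<Rightarrow> nat set set \<Rightarrow> bool" where
  "clutter V E \<longleftrightarrow> finite V \<and> (\<forall>e\<in>E. e \<subseteq> V) \<and>
     (\<forall>e\<in>E. \<forall>f\<in>E. e \<subseteq> f \<longrightarrow> e = f)"

definition edge_ideal :: "nat \<Rightarrow> nat set set \<Rightarrow> 'k::comm_ring_1 mpoly set" where
  "edge_ideal n E = {p. \<exists>g. (\<forall>e\<in>E. in_polyring {..<n} (g e)) \<and>
                          p = (\<Sum>e\<in>E. g e * sqmono e)}"

definition two_collage :: "nat set set \<Rightarrow> nat set set \<Rightarrow> bool" where
  "two_collage E C \<longleftrightarrow> C \<subseteq> E \<and>
     (\<forall>e\<in>E. \<exists>v. \<exists>f\<in>C. e - {v} \<subseteq> f)"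

text \<open>A squarefree Stanley decomposition of S/I, S = K[x_0..x_{n-1}]: a list of pairs
  (U_i, Z_i) of sets of variables with U_i \<subseteq> Z_i (u_i = prod_{x in U_i} x), such that
  S/I = \<Oplus>_i u_i K[Z_i] as K-vector spaces with each summand free over K[Z_i].
  Spelled out in S: every p in S is congruent mod I to some sum \<Sum> u_i f_i with
  f_i \<in> K[Z_i] (the summands span), and such a sum lies in I only if all f_i = 0
  (directness of the sum together with freeness of each u_i K[Z_i]).\<close>
definition stanley_decomp :: "'k itself \<Rightarrow> nat \<Rightarrow> 'k::field mpoly set \<Rightarrow> (nat set \<times> nat set) list \<Rightarrow> bool" where
  "stanley_decomp _ n I D \<longleftrightarrow>
     (\<forall>(U,Z)\<in>set D. U \<subseteq> Z \<and> Z \<subseteq> {..<n}) \<and>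
     (\<forall>p::'k mpoly. in_polyring {..<n} p \<longrightarrow>
        (\<exists>f. (\<forall>i<length D. in_polyring (snd (D!i)) (f i)) \<and>
             p - (\<Sum>i<length D. sqmono (fst (D!i)) * f i) \<in> I)) \<and>
     (\<forall>f::nat \<Rightarrow> 'k mpoly. (\<forall>i<length D. in_polyring (snd (D!i)) (f i)) \<and>
             (\<Sum>i<length D. sqmono (fst (D!i)) * f i) \<in> I \<longrightarrow>
             (\<forall>i<length D. f i = 0))"

definition stanley_reg :: "(nat set \<times> nat set) list \<Rightarrow> nat" where
  "stanley_reg D = Max (insert 0 (set (map (card \<circ> fst) D)))"

definition sreg :: "'k itself \<Rightarrow> nat \<Rightarrow> 'k::field mpoly set \<Rightarrow> nat" where
  "sreg K n I = (LEAST d. \<exists>D. stanley_decomp K n I D \<and> stanley_reg D = d)"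

end

theory Submission
  imports Defs
begin

definition mon :: "nat set \<Rightarrow> (nat \<Rightarrow>\<^sub>0 nat)" where
  "mon U = (\<Sum>i\<in>U. Poly_Mapping.single i 1)"

lemma lookup_mon: "finite U \<Longrightarrow> Poly_Mapping.lookup (mon U) j = (if j \<in> U then 1 else 0)"
  unfolding mon_def by (simp add: lookup_sum lookup_single when_def)

lemma keys_mon: "finite U \<Longrightarrow> Poly_Mapping.keys (mon U) = U"
  by (auto simp: in_keys_iff lookup_mon split: if_splits)

lemma keys_plus_nat: "Poly_Mapping.keys (a + b :: nat \<Rightarrow>\<^sub>0 nat) = Poly_Mapping.keys a \<union> Poly_Mapping.keys b"
  by (auto simp: in_keys_iff lookup_add)

lemma lookup_single_mult:
  "Poly_Mapping.lookup (Poly_Mapping.single a c * f) (a + m) = c * Poly_Mapping.lookup (f :: 'k::comm_ring_1 mpoly) m"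
proof -
  have "Poly_Mapping.lookup (Poly_Mapping.single a c * f) (a + m)
      = (\<Sum>l. (c when a = l) * (\<Sum>q. Poly_Mapping.lookup f q when a + m = l + q))"
    by (simp add: lookup_mult lookup_single)
  also have "\<dots> = (\<Sum>l. (c * (\<Sum>q. Poly_Mapping.lookup f q when a + m = l + q)) when a = l)"
    by (simp add: when_mult)
  also have "\<dots> = c * (\<Sum>q. Poly_Mapping.lookup f q when a + m = a + q)"
    by simp
  also have "(\<lambda>q. Poly_Mapping.lookup f q when a + m = a + q) = (\<lambda>q. Poly_Mapping.lookup f q when q = m)"
    by (auto simp: when_def)
  finally show ?thesis by simp
qed

lemma keys_single_mult:
  "t \<in> Poly_Mapping.keys (Poly_Mapping.single a c * (f :: 'k::comm_ring_1 mpoly)) \<Longrightarrow> \<exists>b\<in>Poly_Mapping.keys f. t = a + b"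
  using keys_mult[of "Poly_Mapping.single a c" f] by (auto split: if_splits)

lemma poly_vars_add: "poly_vars (p + q) \<subseteq> poly_vars p \<union> poly_vars q"
  unfolding poly_vars_def using keys_add[of p q] by auto

lemma poly_vars_sum: "poly_vars (sum f A) \<subseteq> (\<Union>i\<in>A. poly_vars (f i))"
  unfolding poly_vars_def using keys_sum[of f A] by blast

lemma poly_vars_single: "poly_vars (Poly_Mapping.single t c) \<subseteq> Poly_Mapping.keys t"
  unfolding poly_vars_def by auto

lemma poly_expand: "p = (\<Sum>t\<in>Poly_Mapping.keys p. Poly_Mapping.single t (Poly_Mapping.lookup p t))"
proof (rule poly_mapping_eqI)
  fix k
  show "Poly_Mapping.lookup p k = Poly_Mapping.lookup (\<Sum>t\<in>Poly_Mapping.keys p. Poly_Mapping.single t (Poly_Mapping.lookup p t)) k"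
    by (simp add: lookup_sum lookup_single when_def in_keys_iff)
qed

lemma mon_cancel: "finite U \<Longrightarrow> U \<subseteq> Poly_Mapping.keys t \<Longrightarrow> t - mon U + mon U = t"
  by (rule poly_mapping_eqI) (auto simp: lookup_add lookup_minus lookup_mon in_keys_iff)

lemma sqmono_eq: "sqmono U = Poly_Mapping.single (mon U) 1"
  by (simp add: sqmono_def mon_def)

lemma ideal_keys:
  assumes "p \<in> (edge_ideal n E :: 'k::field mpoly set)" "\<forall>e\<in>E. finite e" "t \<in> Poly_Mapping.keys p"
  shows "\<exists>e\<in>E. e \<subseteq> Poly_Mapping.keys t"
proof -
  obtain g where p: "p = (\<Sum>e\<in>E. g e * sqmono e)" using assms(1) unfolding edge_ideal_def by auto
  then obtain e where e: "e \<in> E" "t \<in> Poly_Mapping.keys (g e * sqmono e)"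
    using keys_sum[of "\<lambda>e. g e * sqmono e" E] assms(3) by blast
  then obtain b where "t = mon e + b"
    using keys_single_mult[of t "mon e" 1 "g e"] by (auto simp: sqmono_eq mult.commute)
  then have "e \<subseteq> Poly_Mapping.keys t" using assms(2) e(1) by (simp add: keys_plus_nat keys_mon)
  with e show ?thesis by blast
qed

lemma ideal_zero: "0 \<in> edge_ideal n E"
  unfolding edge_ideal_def by (rule CollectI, rule exI[of _ "\<lambda>_. 0"]) (simp add: in_polyring_def poly_vars_def)

lemma ideal_add: "p \<in> edge_ideal n E \<Longrightarrow> q \<in> edge_ideal n E \<Longrightarrow> p + q \<in> edge_ideal n E"
proof -
  assume "p \<in> edge_ideal n E" "q \<in> edge_ideal n E"
  then obtain g h where g: "\<forall>e\<in>E. in_polyring {..<n} (g e)" "p = (\<Sum>e\<in>E. g e * sqmono e)"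
    and h: "\<forall>e\<in>E. in_polyring {..<n} (h e)" "q = (\<Sum>e\<in>E. h e * sqmono e)"
    unfolding edge_ideal_def by auto
  have "\<forall>e\<in>E. in_polyring {..<n} (g e + h e)"
    using g(1) h(1) poly_vars_add unfolding in_polyring_def by blast
  moreover have "p + q = (\<Sum>e\<in>E. (g e + h e) * sqmono e)"
    by (simp add: g(2) h(2) distrib_right sum.distrib)
  ultimately show ?thesis unfolding edge_ideal_def
    by (intro CollectI exI[of _ "\<lambda>e. g e + h e"]) auto
qed

lemma ideal_sum: "(\<And>x. x \<in> A \<Longrightarrow> f x \<in> edge_ideal n E) \<Longrightarrow> sum f A \<in> edge_ideal n E"
  by (induction A rule: infinite_finite_induct) (auto simp: ideal_zero ideal_add)

lemma ideal_single:
  assumes "finite E" "e \<in> E" "finite e" "e \<subseteq> Poly_Mapping.keys t" "Poly_Mapping.keys t \<subseteq> {..<n}"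
  shows "Poly_Mapping.single t (c::'k::field) \<in> edge_ideal n E"
proof -
  define g where "g = (\<lambda>e'. if e' = e then Poly_Mapping.single (t - mon e) c else 0)"
  have "\<forall>e'\<in>E. in_polyring {..<n} (g e')"
  proof
    fix e' assume "e' \<in> E"
    have "Poly_Mapping.keys (t - mon e) \<subseteq> Poly_Mapping.keys t"
      by (auto simp: in_keys_iff lookup_minus)
    then show "in_polyring {..<n} (g e')" using assms(5) poly_vars_single[of "t - mon e" c]
      by (auto simp: g_def in_polyring_def poly_vars_def)
  qed
  moreover have "(\<Sum>e'\<in>E. g e' * sqmono e') = Poly_Mapping.single t c"
  proof -
    have "(\<Sum>e'\<in>E. g e' * sqmono e') = g e * sqmono e"
    proof -
      have "(\<Sum>e'\<in>E. g e' * sqmono e') = (\<Sum>e'\<in>E. if e' = e then g e * sqmono e else 0)"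
        by (rule sum.cong) (simp_all add: g_def)
      also have "\<dots> = g e * sqmono e" by (simp only: sum.delta[OF assms(1)] assms(2) if_True)
      finally show ?thesis .
    qed
    also have "\<dots> = Poly_Mapping.single (t - mon e + mon e) c"
      by (simp add: g_def sqmono_eq mult_single)
    also have "\<dots> = Poly_Mapping.single t c"
      by (simp only: mon_cancel[OF assms(3,4)])
    finally show ?thesis .
  qed
  ultimately show ?thesis unfolding edge_ideal_def
    by (intro CollectI exI[of _ g] conjI) simp_all
qed

definition face :: "nat \<Rightarrow> nat set set \<Rightarrow> nat set \<Rightarrow> bool" where
  "face n E F \<longleftrightarrow> F \<subseteq> {..<n} \<and> (\<forall>e\<in>E. \<not> e \<subseteq> F)"

lemma face_subset: "face n E Z \<Longrightarrow> F \<subseteq> Z \<Longrightarrow> face n E F"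
  unfolding face_def by blast

lemma keys_poly_vars: "t \<in> Poly_Mapping.keys p \<Longrightarrow> Poly_Mapping.keys t \<subseteq> poly_vars p"
  unfolding poly_vars_def by blast

lemma spanning:
  fixes D :: "(nat set \<times> nat set) list" and p :: "'k::field mpoly"
  assumes fE: "finite E" "\<forall>e\<in>E. finite e"
    and blocks: "\<forall>(U,Z)\<in>set D. U \<subseteq> Z \<and> Z \<subseteq> {..<n} \<and> face n E Z"
    and cover: "\<forall>F. face n E F \<longrightarrow> (\<exists>i<length D. fst (D!i) \<subseteq> F \<and> F \<subseteq> snd (D!i))"
    and uniq: "\<forall>F i j. i<length D \<and> j<length D \<and> fst (D!i) \<subseteq> F \<and> F \<subseteq> snd (D!i)
                  \<and> fst (D!j) \<subseteq> F \<and> F \<subseteq> snd (D!j) \<longrightarrow> i = j"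
    and p: "in_polyring {..<n} p"
  shows "\<exists>f. (\<forall>i<length D. in_polyring (snd (D!i)) (f i)) \<and>
             p - (\<Sum>i<length D. sqmono (fst (D!i)) * f i) \<in> edge_ideal n E"
proof -
  define K where "K = Poly_Mapping.keys p"
  define c where "c = Poly_Mapping.lookup p"
  define blk where "blk = (\<lambda>i F. fst (D!i) \<subseteq> F \<and> F \<subseteq> snd (D!i))"
  define f where "f = (\<lambda>i. \<Sum>t\<in>{t\<in>K. blk i (Poly_Mapping.keys t)}. Poly_Mapping.single (t - mon (fst (D!i))) (c t))"
  have Di: "fst (D!i) \<subseteq> snd (D!i) \<and> snd (D!i) \<subseteq> {..<n} \<and> face n E (snd (D!i))" if "i < length D" for i
    using blocks nth_mem[OF that] by (cases "D!i") auto
  have fK: "finite K" unfolding K_def by simp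
  have A: "in_polyring (snd (D!i)) (f i)" if "i < length D" for i
  proof -
    have "poly_vars (f i) \<subseteq> snd (D!i)"
    proof
      fix x assume "x \<in> poly_vars (f i)"
      then obtain t where t: "t \<in> K" "blk i (Poly_Mapping.keys t)"
        "x \<in> poly_vars (Poly_Mapping.single (t - mon (fst (D!i))) (c t))"
        using poly_vars_sum unfolding f_def by blast
      then have "x \<in> Poly_Mapping.keys (t - mon (fst (D!i)))" using poly_vars_single by blast
      then have "x \<in> Poly_Mapping.keys t" by (auto simp: in_keys_iff lookup_minus)
      then show "x \<in> snd (D!i)" using t(2) unfolding blk_def by blast
    qed
    then show ?thesis unfolding in_polyring_def .
  qed
  have B: "sqmono (fst (D!i)) * f i = (\<Sum>t\<in>K. if blk i (Poly_Mapping.keys t) then Poly_Mapping.single t (c t) else 0)"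
    if "i < length D" for i
  proof -
    have "fst (D!i) \<subseteq> {..<n}" using Di[OF that] by blast
    then have finU: "finite (fst (D!i))" by (rule finite_subset) simp
    have "sqmono (fst (D!i)) * f i = (\<Sum>t\<in>{t\<in>K. blk i (Poly_Mapping.keys t)}. Poly_Mapping.single t (c t))"
      unfolding f_def sum_distrib_left
    proof (rule sum.cong)
      fix t assume "t \<in> {t\<in>K. blk i (Poly_Mapping.keys t)}"
      then have sub: "fst (D!i) \<subseteq> Poly_Mapping.keys t" unfolding blk_def by blast
      have eq: "mon (fst (D!i)) + (t - mon (fst (D!i))) = t"
        using mon_cancel[OF finU sub] by (metis add.commute)
      have "sqmono (fst (D!i)) * Poly_Mapping.single (t - mon (fst (D!i))) (c t)
          = Poly_Mapping.single (mon (fst (D!i)) + (t - mon (fst (D!i)))) (c t)"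
        by (simp add: sqmono_eq mult_single)
      then show "sqmono (fst (D!i)) * Poly_Mapping.single (t - mon (fst (D!i))) (c t) = Poly_Mapping.single t (c t)"
        by (simp only: eq)
    qed simp
    also have "\<dots> = (\<Sum>t\<in>K. if blk i (Poly_Mapping.keys t) then Poly_Mapping.single t (c t) else 0)"
      using fK by (simp add: sum.inter_filter)
    finally show ?thesis .
  qed
  have C: "(\<Sum>i<length D. if blk i (Poly_Mapping.keys t) then Poly_Mapping.single t (c t) else 0)
        = (if face n E (Poly_Mapping.keys t) then Poly_Mapping.single t (c t) else (0::'k mpoly))" for t
  proof (cases "face n E (Poly_Mapping.keys t)")
    case True
    then obtain i0 where i0: "i0 < length D" "blk i0 (Poly_Mapping.keys t)" using cover unfolding blk_def by blast
    have "(\<Sum>i<length D. if blk i (Poly_Mapping.keys t) then Poly_Mapping.single t (c t) else 0)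
        = (\<Sum>i<length D. if i = i0 then Poly_Mapping.single t (c t) else (0::'k mpoly))"
    proof (rule sum.cong)
      fix i assume ii: "i \<in> {..<length D}"
      have "blk i (Poly_Mapping.keys t) \<longleftrightarrow> i = i0"
      proof
        assume "blk i (Poly_Mapping.keys t)"
        then show "i = i0" using uniq i0 ii unfolding blk_def lessThan_iff by blast
      qed (use i0 in simp)
      then show "(if blk i (Poly_Mapping.keys t) then Poly_Mapping.single t (c t) else 0)
        = (if i = i0 then Poly_Mapping.single t (c t) else (0::'k mpoly))"
        by simp
    qed simp
    also have "\<dots> = Poly_Mapping.single t (c t)" using i0(1) by (simp only: sum.delta[OF finite_lessThan]) simp
    finally show ?thesis using True by simp
  next
    case False
    have "\<not> blk i (Poly_Mapping.keys t)" if "i < length D" for i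
      using Di[OF that] False face_subset unfolding blk_def by blast
    then show ?thesis using False by (simp del: sum.lessThan_Suc)
  qed
  have D: "(\<Sum>i<length D. sqmono (fst (D!i)) * f i) = (\<Sum>t\<in>K. if face n E (Poly_Mapping.keys t) then Poly_Mapping.single t (c t) else 0)"
  proof -
    have "(\<Sum>i<length D. sqmono (fst (D!i)) * f i)
       = (\<Sum>i<length D. \<Sum>t\<in>K. if blk i (Poly_Mapping.keys t) then Poly_Mapping.single t (c t) else 0)"
      by (rule sum.cong) (simp_all add: B)
    also have "\<dots> = (\<Sum>t\<in>K. \<Sum>i<length D. if blk i (Poly_Mapping.keys t) then Poly_Mapping.single t (c t) else 0)"
      by (rule sum.swap)
    also have "\<dots> = (\<Sum>t\<in>K. if face n E (Poly_Mapping.keys t) then Poly_Mapping.single t (c t) else 0)"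
      by (simp only: C)
    finally show ?thesis .
  qed
  have E: "p - (\<Sum>i<length D. sqmono (fst (D!i)) * f i)
      = (\<Sum>t\<in>K. if face n E (Poly_Mapping.keys t) then 0 else Poly_Mapping.single t (c t))"
  proof -
    have "p = (\<Sum>t\<in>K. Poly_Mapping.single t (c t))" unfolding K_def c_def by (rule poly_expand)
    then have "p - (\<Sum>i<length D. sqmono (fst (D!i)) * f i) = (\<Sum>t\<in>K. Poly_Mapping.single t (c t) -
        (if face n E (Poly_Mapping.keys t) then Poly_Mapping.single t (c t) else 0))"
      by (simp add: D sum_subtractf)
    also have "\<dots> = (\<Sum>t\<in>K. if face n E (Poly_Mapping.keys t) then 0 else Poly_Mapping.single t (c t))"
      by (rule sum.cong) auto
    finally show ?thesis .
  qed
  have F: "p - (\<Sum>i<length D. sqmono (fst (D!i)) * f i) \<in> edge_ideal n E"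
    unfolding E
  proof (rule ideal_sum)
    fix t assume t: "t \<in> K"
    show "(if face n E (Poly_Mapping.keys t) then 0 else Poly_Mapping.single t (c t)) \<in> edge_ideal n E"
    proof (cases "face n E (Poly_Mapping.keys t)")
      case True then show ?thesis by (simp add: ideal_zero)
    next
      case False
      have sub: "Poly_Mapping.keys t \<subseteq> {..<n}" using keys_poly_vars[of t p] t p
        unfolding K_def in_polyring_def by blast
      then obtain e where e: "e \<in> E" "e \<subseteq> Poly_Mapping.keys t" using False unfolding face_def by blast
      show ?thesis using False ideal_single[OF fE(1) e(1) _ e(2) sub] fE(2) e(1) by simp
    qed
  qed
  show ?thesis by (rule exI[of _ f]) (use A F in blast)
qed

lemma independence:
  fixes D :: "(nat set \<times> nat set) list" and f :: "nat \<Rightarrow> 'k::field mpoly"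
  assumes fE: "\<forall>e\<in>E. finite e"
    and blocks: "\<forall>(U,Z)\<in>set D. U \<subseteq> Z \<and> Z \<subseteq> {..<n} \<and> face n E Z"
    and uniq: "\<forall>F i j. i<length D \<and> j<length D \<and> fst (D!i) \<subseteq> F \<and> F \<subseteq> snd (D!i)
                  \<and> fst (D!j) \<subseteq> F \<and> F \<subseteq> snd (D!j) \<longrightarrow> i = j"
    and fi: "\<forall>i<length D. in_polyring (snd (D!i)) (f i)"
    and inI: "(\<Sum>i<length D. sqmono (fst (D!i)) * f i) \<in> edge_ideal n E"
  shows "\<forall>i<length D. f i = 0"
proof (rule ccontr)
  assume "\<not> (\<forall>i<length D. f i = 0)"
  then obtain j where j: "j < length D" "f j \<noteq> 0" by blast
  then obtain m where m: "m \<in> Poly_Mapping.keys (f j)" by (metis keys_eq_empty ex_in_conv)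
  have Di: "fst (D!i) \<subseteq> snd (D!i) \<and> snd (D!i) \<subseteq> {..<n} \<and> face n E (snd (D!i))" if "i < length D" for i
    using blocks nth_mem[OF that] by (cases "D!i") auto
  have finU: "finite (fst (D!i))" if "i < length D" for i
  proof -
    have "fst (D!i) \<subseteq> {..<n}" using Di[OF that] by blast
    then show ?thesis by (rule finite_subset) simp
  qed
  define t where "t = mon (fst (D!j)) + m"
  have kt: "Poly_Mapping.keys t = fst (D!j) \<union> Poly_Mapping.keys m"
    unfolding t_def by (simp add: keys_plus_nat keys_mon finU[OF j(1)])
  have "Poly_Mapping.keys m \<subseteq> snd (D!j)"
    using keys_poly_vars[OF m] fi j(1) unfolding in_polyring_def by blast
  then have blkj: "fst (D!j) \<subseteq> Poly_Mapping.keys t" "Poly_Mapping.keys t \<subseteq> snd (D!j)"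
    using kt Di[OF j(1)] by auto
  then have facet: "face n E (Poly_Mapping.keys t)" using Di[OF j(1)] face_subset by blast
  have other: "Poly_Mapping.lookup (sqmono (fst (D!i)) * f i) t = 0" if "i < length D" "i \<noteq> j" for i
  proof (rule ccontr)
    assume "Poly_Mapping.lookup (sqmono (fst (D!i)) * f i) t \<noteq> 0"
    then have "t \<in> Poly_Mapping.keys (Poly_Mapping.single (mon (fst (D!i))) 1 * f i)"
      by (simp add: in_keys_iff sqmono_eq)
    then obtain b where b: "b \<in> Poly_Mapping.keys (f i)" "t = mon (fst (D!i)) + b"
      using keys_single_mult by blast
    have kt2: "Poly_Mapping.keys t = fst (D!i) \<union> Poly_Mapping.keys b"
      using b(2) by (simp add: keys_plus_nat keys_mon finU[OF that(1)])
    have "Poly_Mapping.keys b \<subseteq> snd (D!i)"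
      using keys_poly_vars[OF b(1)] fi that(1) unfolding in_polyring_def by blast
    then have "fst (D!i) \<subseteq> Poly_Mapping.keys t" "Poly_Mapping.keys t \<subseteq> snd (D!i)"
      using kt2 Di[OF that(1)] by auto
    then have "i = j" using uniq blkj that(1) j(1) by blast
    then show False using that(2) by simp
  qed
  have "Poly_Mapping.lookup (\<Sum>i<length D. sqmono (fst (D!i)) * f i) t
      = (\<Sum>i<length D. Poly_Mapping.lookup (sqmono (fst (D!i)) * f i) t)"
    by (simp add: lookup_sum)
  also have "\<dots> = (\<Sum>i<length D. if i = j then Poly_Mapping.lookup (f j) m else 0)"
  proof (rule sum.cong)
    fix i assume i: "i \<in> {..<length D}"
    show "Poly_Mapping.lookup (sqmono (fst (D!i)) * f i) t = (if i = j then Poly_Mapping.lookup (f j) m else 0)"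
    proof (cases "i = j")
      case True
      then show ?thesis using lookup_single_mult[of "mon (fst (D!j))" 1 "f j" m]
        by (simp add: t_def sqmono_eq)
    next
      case False
      then show ?thesis using other i by simp
    qed
  qed simp
  also have "\<dots> = Poly_Mapping.lookup (f j) m"
    by (simp only: sum.delta[OF finite_lessThan]) (simp add: j(1))
  finally have "t \<in> Poly_Mapping.keys (\<Sum>i<length D. sqmono (fst (D!i)) * f i)"
    using m by (simp add: in_keys_iff)
  then obtain e where "e \<in> E" "e \<subseteq> Poly_Mapping.keys t" using ideal_keys[OF inI fE] by blast
  then show False using facet unfolding face_def by blast
qed

lemma decomp_from_partition:
  fixes D :: "(nat set \<times> nat set) list"
  assumes fE: "finite E" "\<forall>e\<in>E. finite e"
    and blocks: "\<forall>(U,Z)\<in>set D. U \<subseteq> Z \<and> Z \<subseteq> {..<n} \<and> face n E Z"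
    and cover: "\<forall>F. face n E F \<longrightarrow> (\<exists>i<length D. fst (D!i) \<subseteq> F \<and> F \<subseteq> snd (D!i))"
    and uniq: "\<forall>F i j. i<length D \<and> j<length D \<and> fst (D!i) \<subseteq> F \<and> F \<subseteq> snd (D!i)
                  \<and> fst (D!j) \<subseteq> F \<and> F \<subseteq> snd (D!j) \<longrightarrow> i = j"
  shows "stanley_decomp TYPE('k::field) n (edge_ideal n E) D"
  unfolding stanley_decomp_def
proof (intro conjI)
  show "\<forall>(U, Z)\<in>set D. U \<subseteq> Z \<and> Z \<subseteq> {..<n}" using blocks by blast
next
  show "\<forall>p::'k mpoly. in_polyring {..<n} p \<longrightarrow> (\<exists>f. (\<forall>i<length D. in_polyring (snd (D ! i)) (f i)) \<and>
             p - (\<Sum>i<length D. sqmono (fst (D ! i)) * f i) \<in> edge_ideal n E)"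
    using spanning[OF fE blocks cover uniq] by blast
next
  show "\<forall>f::nat \<Rightarrow> 'k mpoly. (\<forall>i<length D. in_polyring (snd (D ! i)) (f i)) \<and>
          (\<Sum>i<length D. sqmono (fst (D ! i)) * f i) \<in> edge_ideal n E \<longrightarrow> (\<forall>i<length D. f i = 0)"
    using independence[OF fE(2) blocks uniq] by blast
qed

theorem theorem5p16:
  fixes n :: nat and V :: "nat set" and E C :: "nat set set"
  assumes "clutter V E"
    and "V \<subseteq> {..<n}"
    and "\<forall>e\<in>E. e \<noteq> {}"
    and "two_collage E C"
  shows "int (sreg TYPE('k::field) n (edge_ideal n E))
           \<le> (\<Sum>e\<in>C. (int (card e) - 1))"
proof -
  have finV: "finite V" and EV: "\<forall>e\<in>E. e \<subseteq> V" using assms(1) unfolding clutter_def by auto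
  have "E \<subseteq> Pow V" using EV by blast
  then have finE: "finite E" using finV by (metis finite_Pow_iff finite_subset)
  have fine: "\<forall>e\<in>E. finite e" using finV EV by (metis finite_subset)
  have CE: "C \<subseteq> E" and coll: "\<forall>e\<in>E. \<exists>v. \<exists>f\<in>C. e - {v} \<subseteq> f"
    using assms(4) unfolding two_collage_def by auto
  have finC: "finite C" using finE CE by (metis finite_subset)
  define A where "A = \<Union>C"
  have AV: "A \<subseteq> V" using CE EV unfolding A_def by blast
  have finA: "finite A" using finV AV by (metis finite_subset)
  define Z where "Z = (\<lambda>U. U \<union> {x\<in>{..<n} - A. \<forall>e\<in>E. \<not> e \<subseteq> insert x U})"
  define BS where "BS = (\<lambda>U. (U, Z U)) ` {U. U \<subseteq> A \<and> face n E U}"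
  have "finite BS" unfolding BS_def using finA by simp
  then obtain D where D: "set D = BS" "distinct D" using finite_distinct_list by blast
  have ZA: "Z U \<inter> A = U" if "U \<subseteq> A" for U using that unfolding Z_def by blast
  have Zface: "face n E (Z U)" if U: "U \<subseteq> A" "face n E U" for U
    unfolding face_def
  proof (intro conjI ballI notI)
    show "Z U \<subseteq> {..<n}" using U(2) unfolding Z_def face_def by blast
  next
    fix e assume e: "e \<in> E" "e \<subseteq> Z U"
    obtain v f where vf: "f \<in> C" "e - {v} \<subseteq> f" using coll e(1) by blast
    have eA: "e - {v} \<subseteq> A" using vf unfolding A_def by blast
    show False
    proof (cases "e \<subseteq> U")
      case True then show False using U(2) e(1) unfolding face_def by blast
    next
      case False
      then obtain x where x: "x \<in> e" "x \<notin> U" by blast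
      then have xZ: "x \<in> {..<n} - A" "\<forall>e\<in>E. \<not> e \<subseteq> insert x U" using e(2) unfolding Z_def by auto
      have "e \<subseteq> insert x U"
      proof
        fix y assume y: "y \<in> e"
        show "y \<in> insert x U"
        proof (cases "y = v")
          case True
          have "x = v" using x(1) eA xZ(1) by blast
          then show ?thesis using True by simp
        next
          case False
          then have "y \<in> A" using y eA by blast
          moreover have "y \<in> Z U" using y e(2) by blast
          ultimately show ?thesis using ZA[OF U(1)] by blast
        qed
      qed
      then show False using xZ(2) e(1) by blast
    qed
  qed
  have blocks: "\<forall>(U,Z')\<in>set D. U \<subseteq> Z' \<and> Z' \<subseteq> {..<n} \<and> face n E Z'"
    using Zface unfolding D(1) BS_def by (auto simp: Z_def face_def)
  have cover: "\<forall>F. face n E F \<longrightarrow> (\<exists>i<length D. fst (D!i) \<subseteq> F \<and> F \<subseteq> snd (D!i))"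
  proof (intro allI impI)
    fix F assume F: "face n E F"
    define U where "U = F \<inter> A"
    have Uf: "face n E U" using face_subset[OF F] unfolding U_def by blast
    have "(U, Z U) \<in> set D" unfolding D(1) BS_def using Uf U_def by blast
    then obtain i where i: "i < length D" "D!i = (U, Z U)" by (metis in_set_conv_nth)
    have "F \<subseteq> Z U"
    proof
      fix x assume x: "x \<in> F"
      show "x \<in> Z U"
      proof (cases "x \<in> A")
        case True then show ?thesis using x unfolding U_def Z_def by blast
      next
        case False
        have "insert x U \<subseteq> F" using x unfolding U_def by blast
        then have "\<forall>e\<in>E. \<not> e \<subseteq> insert x U" using F unfolding face_def by blast
        moreover have "x < n" using F x unfolding face_def by blast
        ultimately show ?thesis using False unfolding Z_def by blast
      qed
    qed
    then show "\<exists>i<length D. fst (D!i) \<subseteq> F \<and> F \<subseteq> snd (D!i)"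
      using i unfolding U_def by (intro exI[of _ i]) auto
  qed
  have Dform: "\<exists>U. U \<subseteq> A \<and> face n E U \<and> D!i = (U, Z U)" if "i < length D" for i
  proof -
    have "D!i \<in> BS" using nth_mem[OF that] D(1) by simp
    then obtain U where "U \<in> {U. U \<subseteq> A \<and> face n E U}" "D!i = (U, Z U)"
      unfolding BS_def by (rule imageE)
    then show ?thesis by blast
  qed
  have uniq: "\<forall>F i j. i<length D \<and> j<length D \<and> fst (D!i) \<subseteq> F \<and> F \<subseteq> snd (D!i)
                  \<and> fst (D!j) \<subseteq> F \<and> F \<subseteq> snd (D!j) \<longrightarrow> i = j"
  proof (intro allI impI)
    fix F i j
    assume h: "i<length D \<and> j<length D \<and> fst (D!i) \<subseteq> F \<and> F \<subseteq> snd (D!i)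
                  \<and> fst (D!j) \<subseteq> F \<and> F \<subseteq> snd (D!j)"
    have hi: "i < length D" "j < length D" using h by simp_all
    obtain Ui where Ui: "Ui \<subseteq> A" "D!i = (Ui, Z Ui)" using Dform[OF hi(1)] by blast
    obtain Uj where Uj: "Uj \<subseteq> A" "D!j = (Uj, Z Uj)" using Dform[OF hi(2)] by blast
    have s1: "Ui \<subseteq> F" "F \<subseteq> Z Ui" using h Ui(2) by (metis fst_conv, metis snd_conv)
    have s2: "Uj \<subseteq> F" "F \<subseteq> Z Uj" using h Uj(2) by (metis fst_conv, metis snd_conv)
    have e1: "Ui = F \<inter> A" using s1 Ui(1) ZA[OF Ui(1)] by blast
    have e2: "Uj = F \<inter> A" using s2 Uj(1) ZA[OF Uj(1)] by blast
    have "D!i = D!j" using Ui(2) Uj(2) e1 e2 by simp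
    then show "i = j" using D(2) hi by (simp add: nth_eq_iff_index_eq)
  qed
  have dec: "stanley_decomp TYPE('k) n (edge_ideal n E) D"
    by (rule decomp_from_partition[OF finE fine blocks cover uniq])
  define B where "B = (\<Sum>e\<in>C. card e - 1)"
  have cardU: "card U \<le> B" if U: "U \<subseteq> A" "face n E U" for U
  proof -
    have "U = (\<Union>e\<in>C. U \<inter> e)" using U(1) unfolding A_def by blast
    then have "card U \<le> (\<Sum>e\<in>C. card (U \<inter> e))" using card_UN_le[OF finC, of "\<lambda>e. U \<inter> e"] by simp
    also have "\<dots> \<le> B" unfolding B_def
    proof (rule sum_mono)
      fix e assume e: "e \<in> C"
      have "U \<inter> e \<subset> e" using U(2) e CE assms(3) unfolding face_def by blast
      then have "card (U \<inter> e) < card e" using fine e CE by (meson psubset_card_mono subsetD)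
      then show "card (U \<inter> e) \<le> card e - 1" by simp
    qed
    finally show ?thesis .
  qed
  have reg: "stanley_reg D \<le> B"
    unfolding stanley_reg_def
  proof (subst Max_le_iff)
    show "\<forall>a\<in>insert 0 (set (map (card \<circ> fst) D)). a \<le> B"
    proof
      fix a assume "a \<in> insert 0 (set (map (card \<circ> fst) D))"
      then consider "a = 0" | x where "x \<in> set D" "a = card (fst x)" by auto
      then show "a \<le> B"
      proof cases
        case 1 then show ?thesis by simp
      next
        case 2
        then obtain i where i: "i < length D" "x = D!i" by (metis in_set_conv_nth)
        obtain U where "U \<subseteq> A" "face n E U" "D!i = (U, Z U)" using Dform[OF i(1)] by blast
        then show ?thesis using cardU 2(2) i(2) by simp
      qed
    qed
  qed auto
  have "sreg TYPE('k) n (edge_ideal n E) \<le> stanley_reg D"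
    unfolding sreg_def by (rule Least_le) (use dec in blast)
  then have "sreg TYPE('k) n (edge_ideal n E) \<le> B" using reg by simp
  moreover have "int B = (\<Sum>e\<in>C. (int (card e) - 1))"
    unfolding B_def of_nat_sum
  proof (rule sum.cong)
    fix e assume e: "e \<in> C"
    have "card e \<ge> 1" using e CE fine assms(3) by (simp add: Suc_leI card_gt_0_iff subset_iff)
    then show "int (card e - 1) = int (card e) - 1" by simp
  qed simp
  ultimately show ?thesis by linarith
qed

end
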